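(* If a deterministic KAT automaton is $k$-dense, then it has at least $k$ states.
   Context: Atoms $\mathsf{At}_T=2^T$. Deterministic KAT automaton over $(\Sigma,T)$: $A=(Q,\delta,\iota)$, $Q$ finite set of states, $\delta:Q\times\mathsf{At}_T\to\{\mathsf{accept},\mathsf{reject}\}+\Sigma\times Q$, $\iota:\mathsf{At}_T\to\{\mathsf{accept},\mathsf{reject}\}+\Sigma\times Q$. Write $q\xrightarrow{\alpha\mid p}_Aq'$ for $\delta(q,\alpha)=(p,q')$; $q$ accepts $\alpha$ if $\delta(q,\alpha)=\mathsf{accept}$. $A$ is $k$-dense if there exist non-empty subsets $S_1,\dots,S_k\subseteq Q$, distinct atoms $\alpha_1,\dots,\alpha_k\in\mathsf{At}_T$ and, for all $1\le i,j\le k$ and $q\in S_i$, an action $p_{qj}\in\Sigma$, such that for all $i,j,m\le k$: (1) if $q\in S_i$ then $q$ accepts $\alpha_i$; (2) if $i\ne j$ and $q\in S_i$, there is $q'\in S_j$ with $q\xrightarrow{\alpha_j\mid p_{qj}}_Aq'$; (3) if $q\in S_i$ and $q'\in S_j$ with $p_{qm}=p_{q'm}$, then $i=j$. *)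

theory Defs
  imports Main
begin

datatype ('p, 'q) kat_out = Accept | Reject | Step 'p 'q

definition atoms :: "'t set \<Rightarrow> 't set set" where
  "atoms T = Pow T"

definition kat_automaton ::
  "'p set \<Rightarrow> 't set \<Rightarrow> 'q set \<Rightarrow> ('q \<Rightarrow> 't set \<Rightarrow> ('p,'q) kat_out)
     \<Rightarrow> ('t set \<Rightarrow> ('p,'q) kat_out) \<Rightarrow> bool" where
  "kat_automaton \<Sigma> T Q \<delta> \<iota> \<longleftrightarrow> finite \<Sigma> \<and> finite T \<and> finite Q \<and>
     (\<forall>q\<in>Q. \<forall>\<alpha>\<in>atoms T. \<forall>p q'. \<delta> q \<alpha> = Step p q' \<longrightarrow> p \<in> \<Sigma> \<and> q' \<in> Q) \<and>
     (\<forall>\<alpha>\<in>atoms T. \<forall>p q'. \<iota> \<alpha> = Step p q' \<longrightarrow> p \<in> \<Sigma> \<and> q' \<in> Q)"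

definition dense ::
  "'p set \<Rightarrow> 't set \<Rightarrow> 'q set \<Rightarrow> ('q \<Rightarrow> 't set \<Rightarrow> ('p,'q) kat_out) \<Rightarrow> nat \<Rightarrow> bool" where
  "dense \<Sigma> T Q \<delta> k \<longleftrightarrow>
    (\<exists>(S :: nat \<Rightarrow> 'q set) (\<alpha> :: nat \<Rightarrow> 't set) (pa :: 'q \<Rightarrow> nat \<Rightarrow> 'p).
      (\<forall>i\<in>{1..k}. S i \<noteq> {} \<and> S i \<subseteq> Q) \<and>
      (\<forall>i\<in>{1..k}. \<alpha> i \<in> atoms T) \<and>
      inj_on \<alpha> {1..k} \<and>
      (\<forall>i\<in>{1..k}. \<forall>q\<in>S i. \<forall>j\<in>{1..k}. pa q j \<in> \<Sigma>) \<and>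
      (\<forall>i\<in>{1..k}. \<forall>q\<in>S i. \<delta> q (\<alpha> i) = Accept) \<and>
      (\<forall>i\<in>{1..k}. \<forall>j\<in>{1..k}. i \<noteq> j \<longrightarrow>
          (\<forall>q\<in>S i. \<exists>q'\<in>S j. \<delta> q (\<alpha> j) = Step (pa q j) q')) \<and>
      (\<forall>i\<in>{1..k}. \<forall>j\<in>{1..k}. \<forall>m\<in>{1..k}. \<forall>q\<in>S i. \<forall>q'\<in>S j.
          pa q m = pa q' m \<longrightarrow> i = j))"

end

theory Submission
  imports Defs
begin

theorem lemma6p18:
  fixes \<Sigma> :: "'p set" and T :: "'t set" and Q :: "'q set"
    and \<delta> :: "'q \<Rightarrow> 't set \<Rightarrow> ('p,'q) kat_out" and \<iota> :: "'t set \<Rightarrow> ('p,'q) kat_out"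
    and k :: nat
  assumes "kat_automaton \<Sigma> T Q \<delta> \<iota>"
    and "dense \<Sigma> T Q \<delta> k"
  shows "card Q \<ge> k"
proof -
  have fin: "finite Q" using assms(1) unfolding kat_automaton_def by blast
  obtain S :: "nat \<Rightarrow> 'q set" and pa :: "'q \<Rightarrow> nat \<Rightarrow> 'p" where
    ne: "\<forall>i\<in>{1..k}. S i \<noteq> {} \<and> S i \<subseteq> Q" and
    dis: "\<forall>i\<in>{1..k}. \<forall>j\<in>{1..k}. \<forall>m\<in>{1..k}. \<forall>q\<in>S i. \<forall>q'\<in>S j.
          pa q m = pa q' m \<longrightarrow> i = j"
    using assms(2) unfolding dense_def by (elim exE conjE) (rule that)
  define f where "f i = (SOME q. q \<in> S i)" for i
  have fS: "f i \<in> S i" if "i \<in> {1..k}" for i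
    using ne that unfolding f_def by (meson ex_in_conv someI_ex)
  have "inj_on f {1..k}"
  proof (rule inj_onI)
    fix i j assume i: "i \<in> {1..k}" and j: "j \<in> {1..k}" and e: "f i = f j"
    show "i = j" using dis[rule_format, OF i j i fS[OF i]] fS[OF j] e by simp
  qed
  moreover have "f ` {1..k} \<subseteq> Q" using fS ne by blast
  ultimately have "card {1..k} \<le> card Q" using card_inj_on_le fin by blast
  then show ?thesis by simp
qed

end
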